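(* Let $k\ge 1$ and let $\pi$ be a feasible signature of a $k$-move. Then there is a subset $E_\pi\subseteq\{e_1,\ldots,e_k\}$ of the removed edges with $|E_\pi|\ge\lceil k/3\rceil$ whose edges are pairwise non-interfering.
   Context: Consider a tour $T$ (Hamiltonian cycle) in a complete graph and a $k$-move that removes edges $e_1,\ldots,e_k$ of $T$ and inserts $k$ edges $f_1,\ldots,f_k$ so that the result is a tour. Write $e_i=\{v_{2i-1},v_{2i}\}$, where the vertices $v_1,\ldots,v_{2k}$ are pairwise distinct and indexed in the order in which $T$ traverses them. The signature of the move is the permutation $\pi$ of $\{1,\ldots,2k\}$ such that $v_j$ and $v_{\pi(j)}$ are the two endpoints of one of the inserted edges $f_1,\ldots,f_k$; a signature is feasible if it arises from some $k$-move (so $\pi(\pi(j))=j$, $\pi(j)\ne j$, and removing the $e_i$ and inserting the $f_i$ yields a single Hamiltonian cycle). Two removed edges $e_i,e_j$ ($i\ne j$) interfere if some inserted edge connects an endpoint of $e_i$ to an endpoint of $e_j$ (equivalently, $\pi(\{2i-1,2i\})\cap\{2j-1,2j\}\neq\emptyset$); otherwise they are non-interfering. *)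

theory Defs
  imports "HOL-Combinatorics.Permutations" Complex_Main
begin

text \<open>WLOG the tour T on the complete graph with vertex set {0..<n} is 0,1,...,n-1,0.
Edges are 2-element sets of vertices.\<close>

definition tour_edges :: "nat \<Rightarrow> nat set set" where
  "tour_edges n = {{i, (i + 1) mod n} | i. i < n}"

definition is_tour :: "nat \<Rightarrow> nat set set \<Rightarrow> bool" where
  "is_tour n H \<longleftrightarrow> n \<ge> 3 \<and>
     (\<exists>\<sigma>. bij_betw \<sigma> {..<n} {..<n} \<and> H = {{\<sigma> i, \<sigma> ((i + 1) mod n)} | i. i < n})"

text \<open>A k-move on the tour 0,...,n-1: vertices v_j = p j (j = 1..2k) in traversal order,
removed edges e_i = {p(2i-1), p(2i)} (tour edges), inserted edges {p j, p (\<pi> j)}.\<close>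
definition removed_edges :: "nat \<Rightarrow> (nat \<Rightarrow> nat) \<Rightarrow> nat set set" where
  "removed_edges k p = {{p (2*i - 1), p (2*i)} | i. i \<in> {1..k}}"

definition inserted_edges :: "nat \<Rightarrow> (nat \<Rightarrow> nat) \<Rightarrow> (nat \<Rightarrow> nat) \<Rightarrow> nat set set" where
  "inserted_edges k p \<pi> = {{p j, p (\<pi> j)} | j. j \<in> {1..2*k}}"

definition is_kmove :: "nat \<Rightarrow> nat \<Rightarrow> (nat \<Rightarrow> nat) \<Rightarrow> (nat \<Rightarrow> nat) \<Rightarrow> bool" where
  "is_kmove n k p \<pi> \<longleftrightarrow>
     strict_mono_on {1..2*k} p \<and> (\<forall>j\<in>{1..2*k}. p j < n) \<and>
     (\<forall>i\<in>{1..k}. p (2*i) = Suc (p (2*i - 1))) \<and>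
     \<pi> permutes {1..2*k} \<and> (\<forall>j\<in>{1..2*k}. \<pi> j \<noteq> j \<and> \<pi> (\<pi> j) = j) \<and>
     card (inserted_edges k p \<pi>) = k \<and>
     is_tour n ((tour_edges n - removed_edges k p) \<union> inserted_edges k p \<pi>)"

definition feasible_signature :: "nat \<Rightarrow> (nat \<Rightarrow> nat) \<Rightarrow> bool" where
  "feasible_signature k \<pi> \<longleftrightarrow> (\<exists>n p. is_kmove n k p \<pi>)"

definition interfere :: "(nat \<Rightarrow> nat) \<Rightarrow> nat \<Rightarrow> nat \<Rightarrow> bool" where
  "interfere \<pi> i j \<longleftrightarrow> i \<noteq> j \<and> \<pi> ` {2*i - 1, 2*i} \<inter> {2*j - 1, 2*j} \<noteq> {}"

end

theory Submission
  imports Defs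
begin

lemma indep_exists:
  fixes R :: "nat \<Rightarrow> nat \<Rightarrow> bool"
  assumes symR: "\<And>i j. R i j \<Longrightarrow> R j i"
    and deg: "\<And>i. finite {j. R i j} \<and> card {j. R i j} \<le> 2"
  shows "finite V \<Longrightarrow> \<exists>S \<subseteq> V. card V \<le> 3 * card S \<and> (\<forall>i\<in>S. \<forall>j\<in>S. i \<noteq> j \<longrightarrow> \<not> R i j)"
proof (induction "card V" arbitrary: V rule: less_induct)
  case less
  show ?case
  proof (cases "V = {}")
    case True then show ?thesis by auto
  next
    case False
    then obtain v where v: "v \<in> V" by auto
    define N where "N = {j. R v j}"
    define V' where "V' = V - insert v N"
    have fN: "finite N" "card N \<le> 2" using deg N_def by auto
    have fV': "finite V'" using less.prems V'_def by auto
    have "card V \<le> card (insert v N) + card V'"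
      
    proof -
      have "V \<subseteq> insert v N \<union> (V - insert v N)" by blast
      then have "card V \<le> card (insert v N \<union> (V - insert v N))"
        using less.prems fN by (intro card_mono) auto
      also have "\<dots> \<le> card (insert v N) + card (V - insert v N)" by (rule card_Un_le)
      finally show ?thesis by (simp add: V'_def)
    qed
    moreover have "card (insert v N) \<le> 3" using fN card_insert_le[of N v]
      by (simp add: card_insert_if)
    ultimately have c1: "card V \<le> card V' + 3" by linarith
    have "V' \<subset> V" using v unfolding V'_def by auto
    then have "card V' < card V" using less.prems by (rule psubset_card_mono[rotated])
    from less.hyps[OF this fV'] obtain S' where S': "S' \<subseteq> V'" "card V' \<le> 3 * card S'"
      "\<forall>i\<in>S'. \<forall>j\<in>S'. i \<noteq> j \<longrightarrow> \<not> R i j"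
      by blast
    have vS: "v \<notin> S'" using S'(1) V'_def by auto
    have fS: "finite S'" using S'(1) fV' finite_subset by blast
    have noR1: "\<forall>j\<in>S'. \<not> R v j" using S'(1) unfolding V'_def N_def by auto
    have noR: "\<forall>j\<in>S'. \<not> R v j \<and> \<not> R j v" using noR1 symR by metis
    show ?thesis
    proof (intro exI[of _ "insert v S'"] conjI)
      show "insert v S' \<subseteq> V" using S'(1) V'_def v by auto
      show "card V \<le> 3 * card (insert v S')" using vS fS c1 S'(2) by simp
      show "\<forall>i\<in>insert v S'. \<forall>j\<in>insert v S'. i \<noteq> j \<longrightarrow> \<not> R i j"
        using noR S'(3) by simp
    qed
  qed
qed

theorem lemma7:
  fixes k :: nat and \<pi> :: "nat \<Rightarrow> nat"
  assumes "k \<ge> 1" and "feasible_signature k \<pi>"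
  shows "\<exists>S \<subseteq> {1..k}. card S \<ge> nat \<lceil>real k / 3\<rceil> \<and>
           (\<forall>i\<in>S. \<forall>j\<in>S. i \<noteq> j \<longrightarrow> \<not> interfere \<pi> i j)"
proof -
  obtain n p where mv: "is_kmove n k p \<pi>" using assms(2) unfolding feasible_signature_def by blast
  have inv: "\<And>j. j \<in> {1..2*k} \<Longrightarrow> \<pi> (\<pi> j) = j" using mv unfolding is_kmove_def by blast
  define R where "R i j = (interfere \<pi> i j \<and> i \<in> {1..k} \<and> j \<in> {1..k})" for i j
  have exa: "\<exists>a. a \<in> {2*i - 1, 2*i} \<and> \<pi> a \<in> {2*j - 1, 2*j}" if "interfere \<pi> i j" for i j
  proof -
    from that have "\<pi> ` {2*i - 1, 2*i} \<inter> {2*j - 1, 2*j} \<noteq> {}" unfolding interfere_def by simp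
    then obtain b where "b \<in> \<pi> ` {2*i - 1, 2*i}" "b \<in> {2*j - 1, 2*j}" by blast
    then show ?thesis by blast
  qed
  have symR: "R j i" if "R i j" for i j
  proof -
    from that have ij: "i \<noteq> j" "i \<in> {1..k}" "j \<in> {1..k}" and itf: "interfere \<pi> i j"
      unfolding R_def by (auto simp: interfere_def)
    obtain a where a: "a \<in> {2*i - 1, 2*i}" "\<pi> a \<in> {2*j - 1, 2*j}" using exa[OF itf] by blast
    have "a \<in> {1..2*k}" using a(1) ij(2) by auto
    then have e: "\<pi> (\<pi> a) = a" using inv by blast
    have "\<pi> (\<pi> a) \<in> \<pi> ` {2*j - 1, 2*j}" using a(2) by (rule imageI)
    then have "a \<in> \<pi> ` {2*j - 1, 2*j} \<inter> {2*i - 1, 2*i}" using e a(1) by simp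
    then have "interfere \<pi> j i" unfolding interfere_def using ij(1) by blast
    then show ?thesis unfolding R_def using ij by simp
  qed
  have deg: "finite {j. R i j} \<and> card {j. R i j} \<le> 2" for i
  proof -
    define f where "f b = (b + 1) div 2" for b :: nat
    have sub: "{j. R i j} \<subseteq> f ` \<pi> ` {2*i - 1, 2*i}"
    proof
      fix j assume "j \<in> {j. R i j}"
      then have j1: "j \<ge> 1" and itf: "interfere \<pi> i j" unfolding R_def by auto
      obtain a where a: "a \<in> {2*i - 1, 2*i}" "\<pi> a \<in> {2*j - 1, 2*j}" using exa[OF itf] by blast
      have "f (\<pi> a) = j"
      proof (cases "\<pi> a = 2*j - 1")
        case True then show ?thesis using j1 unfolding f_def by simp
      next
        case False then have "\<pi> a = 2*j" using a(2) by simp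
        then show ?thesis unfolding f_def by simp
      qed
      then show "j \<in> f ` \<pi> ` {2*i - 1, 2*i}" using a(1) by blast
    qed
    have "card (f ` \<pi> ` {2*i - 1, 2*i}) \<le> card (\<pi> ` {2*i - 1, 2*i})"
      by (rule card_image_le) simp
    also have "\<dots> \<le> card {2*i - 1, 2*i}" by (rule card_image_le) simp
    also have "\<dots> \<le> 2" by (simp add: card_insert_if)
    finally have c: "card (f ` \<pi> ` {2*i - 1, 2*i}) \<le> 2" .
    have fin: "finite (f ` \<pi> ` {2*i - 1, 2*i})" by simp
    have "finite {j. R i j}" using sub fin by (rule finite_subset)
    moreover have "card {j. R i j} \<le> 2" using card_mono[OF fin sub] c by linarith
    ultimately show ?thesis by simp
  qed
  obtain S where S: "S \<subseteq> {1..k}" "card {1..k} \<le> 3 * card S"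
    "\<forall>i\<in>S. \<forall>j\<in>S. i \<noteq> j \<longrightarrow> \<not> R i j"
  proof -
    have fk: "finite {1..k::nat}" by simp
    from indep_exists[where R=R, OF symR deg fk] show ?thesis using that by blast
  qed
  have "k \<le> 3 * card S" using S(2) by simp
  then have "real k \<le> 3 * real (card S)" by linarith
  then have "real k / 3 \<le> real (card S)" by linarith
  then have "\<lceil>real k / 3\<rceil> \<le> int (card S)" by (simp add: ceiling_le_iff)
  then have "nat \<lceil>real k / 3\<rceil> \<le> nat (int (card S))" by (rule nat_mono)
  then have "nat \<lceil>real k / 3\<rceil> \<le> card S" by (simp only: nat_int)
  moreover have "\<forall>i\<in>S. \<forall>j\<in>S. i \<noteq> j \<longrightarrow> \<not> interfere \<pi> i j"
    using S(1,3) unfolding R_def by blast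
  ultimately show ?thesis using S(1) by blast
qed

end
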